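(* Let $k\ge 4$ and let $C$ be a binary Solomon–Stiffler code with parameters $(k,s;u_1,\dots,u_p)$ (as defined in the context). Then the following three statements are equivalent: (1) $u_p\ge 3$ (this condition being vacuous when $p=0$); (2) $C$ is self-orthogonal; (3) $C$ is doubly-even.
   Context: Let $S_k$ be the $k\times(2^k-1)$ binary matrix whose columns are all nonzero vectors of $\mathbb{F}_2^k$, and for an integer $s\ge1$ let $sS_k$ denote $s$ copies of $S_k$ placed side by side. A binary Solomon–Stiffler code with parameters $(k,s;u_1,\dots,u_p)$, where $s\ge1$, $p\ge0$ and $k>u_1>u_2>\cdots>u_p\ge1$ are integers, is defined as follows: choose subspaces $V_1,\dots,V_p$ of $\mathbb{F}_2^k$ with $\dim V_i=u_i$ such that every nonzero vector of $\mathbb{F}_2^k$ lies in at most $s$ of the $V_i$; let $G'$ be the matrix whose columns are the nonzero vectors of $V_1,\dots,V_p$ (with multiplicity), viewed as a submatrix of $sS_k$; let $G$ be obtained from $sS_k$ by deleting the columns of $G'$. The code generated by $G$ is the Solomon–Stiffler code; it is a binary $[s(2^k-1)-\sum_{i=1}^p(2^{u_i}-1),\,k,\,s2^{k-1}-\sum_{i=1}^p2^{u_i-1}]$ code. A binary code is self-orthogonal if $C\subseteq C^\perp$, and doubly-even if all its codeword weights are divisible by $4$. *)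

theory Defs
  imports "HOL-Analysis.Cartesian_Space" "HOL-Library.Z2" "HOL-Library.Multiset"
begin

text \<open>Vectors of F_2^k are elements of type bit ^ 'k with k = CARD('k).
  A matrix with k rows is given by the list of its columns.\<close>

definition SS_cols :: "nat \<Rightarrow> (bit ^ 'k) multiset" where
  "SS_cols s = repeat_mset s (mset_set (UNIV - {0}))"

definition SS_removed :: "nat \<Rightarrow> (nat \<Rightarrow> (bit ^ 'k) set) \<Rightarrow> (bit ^ 'k) multiset" where
  "SS_removed p V = (\<Sum>i\<in>{1..p}. mset_set (V i - {0}))"

definition SS_data :: "nat \<Rightarrow> nat \<Rightarrow> (nat \<Rightarrow> nat) \<Rightarrow> (nat \<Rightarrow> (bit ^ 'k) set) \<Rightarrow> bool" where
  "SS_data s p u V \<longleftrightarrow> s \<ge> 1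
     \<and> (p \<ge> 1 \<longrightarrow> u 1 < CARD('k) \<and> u p \<ge> 1)
     \<and> (\<forall>i. 1 \<le> i \<and> i < p \<longrightarrow> u (Suc i) < u i)
     \<and> (\<forall>i\<in>{1..p}. vec.subspace (V i) \<and> vec.dim (V i) = u i)
     \<and> (\<forall>v::bit^'k. v \<noteq> 0 \<longrightarrow> card {i\<in>{1..p}. v \<in> V i} \<le> s)"

text \<open>A column list G of a Solomon--Stiffler generator matrix
  (any ordering of the columns of sS_k with the columns of G' removed).\<close>
definition SS_matrix :: "nat \<Rightarrow> nat \<Rightarrow> (nat \<Rightarrow> (bit ^ 'k) set) \<Rightarrow> (bit ^ 'k) list \<Rightarrow> bool" where
  "SS_matrix s p V G \<longleftrightarrow> mset G = SS_cols s - SS_removed p V"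

definition gen_code :: "(bit ^ 'k) list \<Rightarrow> bit list set" where
  "gen_code G = {map (\<lambda>c. \<Sum>i\<in>UNIV. x $ i * c $ i) G | x. True}"

definition dot :: "bit list \<Rightarrow> bit list \<Rightarrow> bit" where
  "dot a b = (\<Sum>j<length a. a ! j * b ! j)"

definition hweight :: "bit list \<Rightarrow> nat" where
  "hweight a = card {j. j < length a \<and> a ! j \<noteq> 0}"

definition self_orthogonal :: "bit list set \<Rightarrow> bool" where
  "self_orthogonal C \<longleftrightarrow> (\<forall>a\<in>C. \<forall>b\<in>C. dot a b = 0)"

definition doubly_even :: "bit list set \<Rightarrow> bool" where
  "doubly_even C \<longleftrightarrow> (\<forall>a\<in>C. 4 dvd hweight a)"

end

theory Submission
  imports Defs
begin


lemma bit_UNIV: "(UNIV :: bit set) = {0,1}"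
  by (auto intro: bit.exhaust)

instance bit :: finite
  by standard (simp add: bit_UNIV)

lemma card_bit: "CARD(bit) = 2"
  by (simp add: bit_UNIV)

lemma bit_add_self [simp]: "(a::bit) + a = 0"
  by (cases a) simp_all

lemma vec_add_self [simp]: "(v::bit^'k) + v = 0"
  by (simp add: vec_eq_iff)

lemma card_span_indep:
  fixes B :: "(bit^'k) set"
  assumes "finite B" "vec.independent B"
  shows "card (vec.span B) = 2 ^ card B"
  using assms
proof (induction B rule: finite_induct)
  case empty
  then show ?case by simp
next
  case (insert b B)
  have indB: "vec.independent B" using insert.prems vec.independent_mono by blast
  have nb: "b \<notin> vec.span B" using insert.prems insert.hyps(2) by (simp add: vec.independent_insert)
  have eq: "vec.span (insert b B) = vec.span B \<union> ((\<lambda>x. x + b) ` vec.span B)"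
  proof
    show "vec.span (insert b B) \<subseteq> vec.span B \<union> ((\<lambda>x. x + b) ` vec.span B)"
    proof
      fix x assume "x \<in> vec.span (insert b B)"
      then obtain c where c: "x - c *s b \<in> vec.span B" using vec.span_breakdown_eq by blast
      show "x \<in> vec.span B \<union> ((\<lambda>x. x + b) ` vec.span B)"
      proof (cases c)
        case zero then show ?thesis using c by simp
      next
        case one
        then have "x - b \<in> vec.span B" using c by simp
        moreover have "x = (x - b) + b" by simp
        ultimately show ?thesis by blast
      qed
    qed
  next
    show "vec.span B \<union> ((\<lambda>x. x + b) ` vec.span B) \<subseteq> vec.span (insert b B)"
      by (auto intro: vec.span_add vec.span_base vec.span_mono[THEN subsetD, of B "insert b B"])
  qed
  have disj: "vec.span B \<inter> ((\<lambda>x. x + b) ` vec.span B) = {}"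
  proof (rule ccontr)
    assume "\<not> ?thesis"
    then obtain y where y: "y \<in> vec.span B" "y + b \<in> vec.span B" by auto
    then have "(y + b) - y \<in> vec.span B" by (intro vec.span_diff)
    then show False using nb by simp
  qed
  have inj: "inj (\<lambda>x::bit^'k. x + b)" by (rule injI) simp
  have "card (vec.span (insert b B)) = card (vec.span B) + card ((\<lambda>x. x + b) ` vec.span B)"
    unfolding eq by (rule card_Un_disjoint) (auto simp: disj)
  also have "card ((\<lambda>x. x + b) ` vec.span B) = card (vec.span B)"
    using inj by (simp add: card_image inj_on_def)
  finally show ?case using insert indB by simp
qed

lemma card_subspace:
  fixes W :: "(bit^'k) set"
  assumes "vec.subspace W"
  shows "card W = 2 ^ vec.dim W"
proof -
  obtain B where B: "B \<subseteq> W" "vec.independent B" "W \<subseteq> vec.span B" "card B = vec.dim W"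
    using vec.basis_exists by blast
  have "vec.span B = W" using B assms vec.span_subspace by blast
  then show ?thesis using card_span_indep[of B] B by simp
qed



declare mult_bit_eq_and[simp del] add_bit_eq_xor[simp del]

definition ip :: "bit^'k \<Rightarrow> bit^'k \<Rightarrow> bit" where
  "ip x g = (\<Sum>i\<in>UNIV. x $ i * g $ i)"

definition ev :: "'k \<Rightarrow> bit^'k" where
  "ev i = (\<chi> j. if j = i then 1 else 0)"

lemma ip_add_right: "ip x (g + h) = ip x g + ip x h"
  by (simp add: ip_def distrib_left sum.distrib)

lemma ip_add_left: "ip (x + y) g = ip x g + ip y g"
  by (simp add: ip_def distrib_right sum.distrib)

lemma ip_zero_right [simp]: "ip x 0 = 0"
  by (simp add: ip_def)

lemma ip_zero_left [simp]: "ip 0 x = 0"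
  by (simp add: ip_def)

lemma ip_comm: "ip x y = ip y x"
  by (simp add: ip_def mult.commute)

lemma ip_ev_left: "ip (ev i) w = w $ i"
proof -
  have "ip (ev i) w = (\<Sum>j\<in>UNIV. if j = i then w $ j else 0)"
    unfolding ip_def ev_def by (rule sum.cong) auto
  also have "\<dots> = w $ i" by simp
  finally show ?thesis .
qed

lemma ip_ev_right: "ip w (ev i) = w $ i"
  using ip_ev_left ip_comm by metis

lemma nonzero_coord: "(w::bit^'k) \<noteq> 0 \<Longrightarrow> \<exists>i. w $ i = 1"
proof -
  assume "w \<noteq> 0"
  then obtain i where "w $ i \<noteq> 0 $ i" using vec_eq_iff[of w 0] by blast
  then show ?thesis by auto
qed

lemma separate:
  fixes w1 w2 :: "bit^'k"
  assumes "w1 \<noteq> 0" "w1 \<noteq> w2"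
  shows "\<exists>x. ip x w1 = 1 \<and> ip x w2 = 0"
proof -
  obtain i where i: "w1 $ i = 1" using nonzero_coord assms(1) by blast
  show ?thesis
  proof (cases "w2 $ i = 0")
    case True then show ?thesis using i by (intro exI[of _ "ev i"]) (simp add: ip_ev_left)
  next
    case False
    then have i2: "w2 $ i = 1" by simp
    obtain j where j: "w1 $ j \<noteq> w2 $ j" using assms(2) vec_eq_iff by blast
    show ?thesis
    proof (cases "w1 $ j = 1")
      case True
      then have "w2 $ j = 0" using j by auto
      then show ?thesis using True by (intro exI[of _ "ev j"]) (simp add: ip_ev_left)
    next
      case False
      then have "w1 $ j = 0" "w2 $ j = 1" using j by auto
      then show ?thesis using i i2
        by (intro exI[of _ "ev i + ev j"]) (simp add: ip_add_left ip_ev_left)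
    qed
  qed
qed

lemma half_count:
  fixes W :: "(bit^'k) set"
  assumes cl: "\<And>a b. a \<in> W \<Longrightarrow> b \<in> W \<Longrightarrow> a + b \<in> W"
    and w0: "w0 \<in> W" "ip x w0 = 1"
  shows "2 * card {w\<in>W. ip x w = 1} = card W"
proof -
  let ?W0 = "{w\<in>W. ip x w = 0}" and ?W1 = "{w\<in>W. ip x w = 1}"
  have un: "W = ?W0 \<union> ?W1" by auto
  have img: "(\<lambda>w. w + w0) ` ?W0 = ?W1"
  proof
    show "(\<lambda>w. w + w0) ` ?W0 \<subseteq> ?W1" using w0 cl by (auto simp: ip_add_right)
  next
    show "?W1 \<subseteq> (\<lambda>w. w + w0) ` ?W0"
    proof
      fix w assume w: "w \<in> ?W1"
      have "w + w0 \<in> ?W0" using w w0 cl by (auto simp: ip_add_right)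
      moreover have "w = (w + w0) + w0" by (simp add: add.assoc)
      ultimately show "w \<in> (\<lambda>w. w + w0) ` ?W0" by blast
    qed
  qed
  have "inj_on (\<lambda>w::bit^'k. w + w0) ?W0" by (rule inj_onI) simp
  then have "card ((\<lambda>w. w + w0) ` ?W0) = card ?W0" by (rule card_image)
  then have "card ?W1 = card ?W0" unfolding img .
  moreover have "card (?W0 \<union> ?W1) = card ?W0 + card ?W1"
    by (rule card_Un_disjoint) auto
  moreover have "card W = card (?W0 \<union> ?W1)" using un by (rule arg_cong)
  ultimately show ?thesis by linarith
qed

lemma subspace_count:
  fixes V :: "(bit^'k) set"
  assumes "vec.subspace V"
  shows "card {w\<in>V. ip x w = 1} = (if \<exists>w\<in>V. ip x w = 1 then 2 ^ (vec.dim V - 1) else 0)"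
proof (cases "\<exists>w\<in>V. ip x w = 1")
  case True
  then obtain w0 where "w0 \<in> V" "ip x w0 = 1" by blast
  then have h: "2 * card {w\<in>V. ip x w = 1} = 2 ^ vec.dim V"
    using half_count[of V w0 x, OF vec.subspace_add[OF assms]] card_subspace[OF assms] by simp
  show ?thesis
  proof (cases "vec.dim V")
    case 0
    then have "2 * card {w\<in>V. ip x w = 1} = 1" using h by (simp only: power_0)
    then have False by presburger
    then show ?thesis ..
  next
    case (Suc n)
    then have "2 * card {w\<in>V. ip x w = 1} = 2 * 2 ^ n" using h by (simp only: power_Suc)
    then show ?thesis using True Suc by simp
  qed
next
  case False then show ?thesis by auto
qed

lemma whole_count:
  fixes x :: "bit^'k"
  assumes "x \<noteq> 0"
  shows "card {g::bit^'k. ip x g = 1} = 2 ^ (CARD('k) - 1)"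
proof -
  obtain i where i: "x $ i = 1" using nonzero_coord assms by blast
  have h: "2 * card {g\<in>UNIV. ip x g = 1} = card (UNIV :: (bit^'k) set)"
    by (rule half_count[of UNIV "ev i"]) (auto simp: ip_ev_right i)
  have "CARD('k) = Suc (CARD('k) - 1)" by simp
  moreover have "card (UNIV :: (bit^'k) set) = 2 ^ CARD('k)" by (simp add: card_bit)
  ultimately have "card (UNIV :: (bit^'k) set) = 2 * 2 ^ (CARD('k) - 1)"
    by (metis power_Suc)
  then show ?thesis using h by simp
qed



lemma bit_sum_card:
  assumes "finite J"
  shows "(\<Sum>j\<in>J. (b j :: bit)) = of_nat (card {j\<in>J. b j = 1})"
proof -
  have "(\<Sum>j\<in>J. b j) = (\<Sum>j\<in>J. if b j = 1 then 1 else 0)"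
    by (rule sum.cong) auto
  also have "\<dots> = (\<Sum>j\<in>{j\<in>J. b j = 1}. 1)"
    using sum.inter_filter[OF assms, of "\<lambda>_. (1::bit)" "\<lambda>j. b j = 1"] by simp
  also have "\<dots> = of_nat (card {j\<in>J. b j = 1})" by simp
  finally show ?thesis .
qed

lemma of_nat_bit: "(of_nat n :: bit) = (if even n then 0 else 1)"
  by (induction n) auto

lemma bit_mult_eq_1: "((a::bit) * b = 1) \<longleftrightarrow> a = 1 \<and> b = 1"
  by (cases a; cases b) auto

lemma bit_add_eq_1: "((a::bit) + b = 1) \<longleftrightarrow> (a = 1) \<noteq> (b = 1)"
  by (cases a; cases b) auto

definition wt :: "(bit^'k) list \<Rightarrow> bit^'k \<Rightarrow> nat" where
  "wt G x = card {j. j < length G \<and> ip x (G ! j) = 1}"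

definition both :: "(bit^'k) list \<Rightarrow> bit^'k \<Rightarrow> bit^'k \<Rightarrow> nat" where
  "both G x y = card {j. j < length G \<and> ip x (G ! j) = 1 \<and> ip y (G ! j) = 1}"

lemma gen_code_eq: "gen_code G = range (\<lambda>x. map (ip x) G)"
  unfolding gen_code_def ip_def by auto

lemma hweight_cw: "hweight (map (ip x) G) = wt G x"
  unfolding hweight_def wt_def by (intro arg_cong[where f=card] Collect_cong) auto

lemma dot_cw: "dot (map (ip x) G) (map (ip y) G) = of_nat (both G x y)"
proof -
  have "dot (map (ip x) G) (map (ip y) G) = (\<Sum>j<length G. ip x (G ! j) * ip y (G ! j))"
    unfolding dot_def by simp
  also have "\<dots> = of_nat (card {j\<in>{..<length G}. ip x (G ! j) * ip y (G ! j) = 1})"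
    by (rule bit_sum_card) simp
  also have "{j\<in>{..<length G}. ip x (G ! j) * ip y (G ! j) = 1}
      = {j. j < length G \<and> ip x (G ! j) = 1 \<and> ip y (G ! j) = 1}"
    by (auto simp: bit_mult_eq_1)
  finally show ?thesis unfolding both_def .
qed

lemma symdiff_card:
  assumes "finite A" "finite B"
  shows "card ((A - B) \<union> (B - A)) + 2 * card (A \<inter> B) = card A + card B"
proof -
  have "card ((A - B) \<union> (B - A)) = card (A - B) + card (B - A)"
    by (rule card_Un_disjoint) (use assms in auto)
  moreover have "card (A - B) = card A - card (A \<inter> B)"
    using assms by (simp add: card_Diff_subset_Int)
  moreover have "card (B - A) = card B - card (A \<inter> B)"
    using assms by (metis card_Diff_subset_Int finite_Int inf_commute)
  moreover have "card (A \<inter> B) \<le> card A" "card (A \<inter> B) \<le> card B"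
    using assms by (auto intro: card_mono)
  ultimately show ?thesis by linarith
qed

lemma wt_add: "wt G (x + y) + 2 * both G x y = wt G x + wt G y"
proof -
  let ?A = "{j. j < length G \<and> ip x (G ! j) = 1}"
  let ?B = "{j. j < length G \<and> ip y (G ! j) = 1}"
  have "{j. j < length G \<and> ip (x + y) (G ! j) = 1} = (?A - ?B) \<union> (?B - ?A)"
    by (auto simp: ip_add_left bit_add_eq_1)
  moreover have "{j. j < length G \<and> ip x (G ! j) = 1 \<and> ip y (G ! j) = 1} = ?A \<inter> ?B"
    by auto
  moreover have "finite ?A" "finite ?B" by auto
  ultimately show ?thesis unfolding wt_def both_def using symdiff_card[of ?A ?B] by simp
qed

lemma wt_zero: "wt G 0 = 0"
  unfolding wt_def by simp



lemma filter_mset_sum: "filter_mset P (sum f A) = (\<Sum>i\<in>A. filter_mset P (f i))"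
  by (induction A rule: infinite_finite_induct) simp_all

lemma size_sum_mset: "size (sum (f :: 'a \<Rightarrow> 'b multiset) A) = (\<Sum>i\<in>A. size (f i))"
  by (induction A rule: infinite_finite_induct) simp_all

lemma filter_repeat_mset: "filter_mset P (repeat_mset n M) = repeat_mset n (filter_mset P M)"
  by (rule multiset_eqI) simp

lemma rem_sub:
  assumes "SS_data s p u V"
  shows "SS_removed p V \<subseteq># (SS_cols s :: (bit^'k) multiset)"
proof (rule mset_subset_eqI)
  fix a :: "bit^'k"
  have c: "count (SS_removed p V) a = (\<Sum>i\<in>{1..p}. if a \<in> V i - {0} then 1 else 0)"
    unfolding SS_removed_def count_sum by (rule sum.cong) (simp_all add: count_mset_set')
  show "count (SS_removed p V) a \<le> count (SS_cols s) a"
  proof (cases "a = 0")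
    case True then show ?thesis unfolding c by simp
  next
    case False
    have "(\<Sum>i\<in>{1..p}. if a \<in> V i - {0} then 1 else 0) = (\<Sum>i\<in>{i\<in>{1..p}. a \<in> V i}. (1::nat))"
      using sum.inter_filter[of "{1..p}" "\<lambda>_. (1::nat)" "\<lambda>i. a \<in> V i"] False by simp
    also have "\<dots> = card {i\<in>{1..p}. a \<in> V i}" by simp
    also have "\<dots> \<le> s" using assms False unfolding SS_data_def by blast
    finally show ?thesis unfolding c SS_cols_def using False by simp
  qed
qed

lemma wt_formula:
  fixes G :: "(bit^'k) list"
  assumes data: "SS_data s p u V" and mat: "SS_matrix s p V G" and x: "x \<noteq> 0"
  shows "wt G x + (\<Sum>i\<in>{1..p}. card {w\<in>V i. ip x w = 1}) = s * 2 ^ (CARD('k) - 1)"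
proof -
  define P where "P = (\<lambda>g. ip x g = 1)"
  have P0: "\<not> P 0" unfolding P_def by simp
  have "wt G x = length (filter P G)"
    unfolding wt_def P_def by (simp add: length_filter_conv_card)
  also have "\<dots> = size (filter_mset P (mset G))"
    by (metis mset_filter size_mset)
  also have "\<dots> = size (filter_mset P (SS_cols s) - filter_mset P (SS_removed p V))"
    using mat unfolding SS_matrix_def by simp
  also have "\<dots> = size (filter_mset P (SS_cols s)) - size (filter_mset P (SS_removed p V))"
    by (rule size_Diff_submset, rule filter_mset_mono_strong) (use rem_sub[OF data] in auto)
  finally have w: "wt G x = size (filter_mset P (SS_cols s)) - size (filter_mset P (SS_removed p V))" .
  have le: "size (filter_mset P (SS_removed p V)) \<le> size (filter_mset P (SS_cols s :: (bit^'k) multiset))"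
    by (rule size_mset_mono, rule filter_mset_mono_strong) (use rem_sub[OF data] in auto)
  have "{g \<in> UNIV - {0}. P g} = {g. P g}" using P0 by auto
  then have c1: "size (filter_mset P (SS_cols s :: (bit^'k) multiset)) = s * 2 ^ (CARD('k) - 1)"
    unfolding SS_cols_def filter_repeat_mset using whole_count[OF x] by (simp add: P_def)
  have "size (filter_mset P (SS_removed p V)) = (\<Sum>i\<in>{1..p}. card {w\<in>V i - {0}. P w})"
    unfolding SS_removed_def filter_mset_sum size_sum_mset by simp
  also have "\<dots> = (\<Sum>i\<in>{1..p}. card {w\<in>V i. ip x w = 1})"
  proof (rule sum.cong)
    fix i show "card {w\<in>V i - {0}. P w} = card {w\<in>V i. ip x w = 1}"
      using P0 unfolding P_def by (intro arg_cong[where f=card]) auto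
  qed simp
  finally show ?thesis using w le c1 by linarith
qed



lemma u_mono:
  assumes "\<forall>i. 1 \<le> i \<and> i < p \<longrightarrow> u (Suc i) < (u i :: nat)" "1 \<le> i" "i \<le> j" "j \<le> p"
  shows "u j + (j - i) \<le> u i"
  using assms(3,4)
proof (induction j rule: dec_induct)
  case base then show ?case by simp
next
  case (step j)
  then have "u (Suc j) < u j" using assms(1,2) by auto
  then show ?case using step by simp
qed

lemma term_count:
  assumes data: "SS_data s p u V" and i: "i \<in> {1..p}"
  shows "card {w\<in>V i. ip x w = 1} = (if \<exists>w\<in>V i. ip x w = 1 then 2 ^ (u i - 1) else 0)"
proof -
  have "vec.subspace (V i)" "vec.dim (V i) = u i" using data i unfolding SS_data_def by auto
  then show ?thesis using subspace_count[of "V i" x] by simp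
qed

lemma dvd_R:
  assumes data: "SS_data s p u V" and h: "\<And>i. i \<in> A \<Longrightarrow> n \<le> u i - 1" and A: "A \<subseteq> {1..p}"
  shows "2 ^ n dvd (\<Sum>i\<in>A. card {w\<in>V i. ip x w = 1})"
proof (rule dvd_sum)
  fix i assume iA: "i \<in> A"
  then have "i \<in> {1..p}" using A by blast
  then have c: "card {w\<in>V i. ip x w = 1} = (if \<exists>w\<in>V i. ip x w = 1 then 2 ^ (u i - 1) else 0)"
    by (rule term_count[OF data])
  have "(2::nat) ^ n dvd 2 ^ (u i - 1)" using h[OF iA] by (rule le_imp_power_dvd)
  then show "2 ^ n dvd card {w\<in>V i. ip x w = 1}" unfolding c by simp
qed

lemma both_self: "both G x x = wt G x"
  unfolding both_def wt_def by simp

lemma so_even: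
  assumes "self_orthogonal (gen_code G)"
  shows "even (both G x y)"
proof -
  have "dot (map (ip x) G) (map (ip y) G) = 0"
    using assms unfolding self_orthogonal_def gen_code_eq by blast
  then show ?thesis unfolding dot_cw of_nat_bit by (auto split: if_splits)
qed

lemma two_elems:
  assumes "finite S" "card S \<ge> 2"
  obtains a b where "a \<in> S" "b \<in> S" "a \<noteq> b"
proof -
  obtain a where a: "a \<in> S" using assms by fastforce
  have "card (S - {a}) \<ge> 1" using assms a by simp
  then have "S - {a} \<noteq> {}" by (metis card.empty not_one_le_zero)
  then obtain b where "b \<in> S - {a}" by blast
  then show ?thesis using a that by blast
qed



lemma ar1: "(a::nat) + (q + 1) = n \<Longrightarrow> 2 dvd q \<Longrightarrow> even a \<Longrightarrow> even n \<Longrightarrow> False"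
  by presburger

lemma ar2: "(a::nat) + (q + 2) = n \<Longrightarrow> 4 dvd q \<Longrightarrow> 4 dvd n \<Longrightarrow> a mod 4 = 2"
  by presburger

lemma ar3: "(a::nat) mod 4 = 2 \<Longrightarrow> b mod 4 = 2 \<Longrightarrow> c mod 4 = 2 \<Longrightarrow> even m \<Longrightarrow> c + 2 * m = a + b \<Longrightarrow> False"
  by presburger

lemma ar4: "(c::nat) + 2 * m = a + b \<Longrightarrow> 4 dvd a \<Longrightarrow> 4 dvd b \<Longrightarrow> 4 dvd c \<Longrightarrow> even m"
  by presburger

lemma SS_dataD:
  assumes "SS_data s p u V"
  shows "\<forall>i. 1 \<le> i \<and> i < p \<longrightarrow> u (Suc i) < u i" "p \<ge> 1 \<Longrightarrow> u p \<ge> 1"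
    "i \<in> {1..p} \<Longrightarrow> vec.subspace (V i)" "i \<in> {1..p} \<Longrightarrow> vec.dim (V i) = u i"
  using assms unfolding SS_data_def by auto

theorem theorem4p3:
  fixes s p :: nat and u :: "nat \<Rightarrow> nat" and V :: "nat \<Rightarrow> (bit ^ 'k) set"
    and G :: "(bit ^ 'k) list"
  assumes "CARD('k) \<ge> 4"
    and "SS_data s p u V"
    and "SS_matrix s p V G"
  shows "((p = 0 \<or> u p \<ge> 3) \<longleftrightarrow> self_orthogonal (gen_code G))
       \<and> (self_orthogonal (gen_code G) \<longleftrightarrow> doubly_even (gen_code G))"
proof -
  note data = assms(2) and mat = assms(3)
  define N where "N = s * 2 ^ (CARD('k) - 1)"
  define R where "R = (\<lambda>x. \<Sum>i\<in>{1..p}. card {w\<in>V i. ip x w = 1})"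
  have wf: "x \<noteq> 0 \<Longrightarrow> wt G x + R x = N" for x
    unfolding R_def N_def by (rule wt_formula[OF data mat])
  obtain m0 where m0: "CARD('k) = 4 + m0" using assms(1) le_Suc_ex by blast
  have m: "CARD('k) - 1 = 3 + m0" using m0 by linarith
  have "(2::nat) ^ (CARD('k) - 1) = 8 * 2 ^ m0" unfolding m power_add by (simp del: CARD_vec)
  then have "(8::nat) dvd 2 ^ (CARD('k) - 1)" by simp
  then have N8: "8 dvd N" unfolding N_def by simp
  note dec = SS_dataD(1)[OF data] and up1 = SS_dataD(2)[OF data]
  have ge_up: "i \<in> {1..p} \<Longrightarrow> u p \<le> u i" for i using u_mono[OF dec, of i p] by auto
  have gt_up: "i \<in> {1..<p} \<Longrightarrow> u p + 1 \<le> u i" for i using u_mono[OF dec, of i p] by auto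
  have A: "doubly_even (gen_code G)" if h: "p = 0 \<or> u p \<ge> 3"
  proof -
    have "4 dvd wt G x" for x
    proof (cases "x = 0")
      case True then show ?thesis by (simp add: wt_zero)
    next
      case False
      have "2 ^ 2 dvd R x" unfolding R_def
        by (rule dvd_R[OF data]) (use h ge_up in fastforce)+
      then have "4 dvd R x" by simp
      moreover have "4 dvd N" using N8 by (rule dvd_trans[rotated]) simp
      ultimately show ?thesis using wf[OF False] by (metis dvd_add_right_iff add.commute)
    qed
    then show ?thesis unfolding doubly_even_def gen_code_eq by (auto simp: hweight_cw)
  qed
  have B: "self_orthogonal (gen_code G)" if h: "doubly_even (gen_code G)"
  proof -
    have w4: "4 dvd wt G x" for x
      using h unfolding doubly_even_def gen_code_eq by (auto simp: hweight_cw)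
    have "even (both G x y)" for x y
    proof -
      have "wt G (x + y) + 2 * both G x y = wt G x + wt G y" by (rule wt_add)
      then show ?thesis using w4[of x] w4[of y] w4[of "x + y"] by (rule ar4)
    qed
    then show ?thesis unfolding self_orthogonal_def gen_code_eq
      by (auto simp: dot_cw of_nat_bit)
  qed
  have C: "p = 0 \<or> u p \<ge> 3" if so: "self_orthogonal (gen_code G)"
  proof (rule ccontr)
    assume "\<not> (p = 0 \<or> u p \<ge> 3)"
    then have p1: "p \<ge> 1" and up: "u p \<le> 2" by auto
    have pp: "p \<in> {1..p}" using p1 by simp
    have sub: "vec.subspace (V p)" and dimp: "vec.dim (V p) = u p"
      using SS_dataD(3,4)[OF data pp] by auto
    have cardVp: "card (V p) = 2 ^ u p" using card_subspace[OF sub] dimp by simp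
    have zV: "0 \<in> V p" using sub by (rule vec.subspace_0)
    have split: "R x = (\<Sum>i\<in>{1..<p}. card {w\<in>V i. ip x w = 1}) + card {w\<in>V p. ip x w = 1}" for x
    proof -
      have "{1..p} = insert p {1..<p}" using p1 by auto
      then show ?thesis unfolding R_def by simp
    qed
    have Qd: "2 ^ u p dvd (\<Sum>i\<in>{1..<p}. card {w\<in>V i. ip x w = 1})" for x
      by (rule dvd_R[OF data]) (use gt_up in fastforce)+
    have Tp: "(\<exists>w\<in>V p. ip x w = 1) \<Longrightarrow> card {w\<in>V p. ip x w = 1} = 2 ^ (u p - 1)" for x
      using term_count[OF data pp, of x] by simp
    have nz: "ip x w = 1 \<Longrightarrow> x \<noteq> 0" for x w by auto
    have card_nz: "card (V p - {0}) = 2 ^ u p - 1" using cardVp zV by simp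
    show False
    proof (cases "u p = 1")
      case True
      then have "card (V p - {0}) \<ge> 1" using card_nz by simp
      then have "V p - {0} \<noteq> {}" by (metis card.empty not_one_le_zero)
      then obtain w where w: "w \<in> V p" "w \<noteq> 0" by blast
      obtain x where x: "ip x w = 1" using separate[of w 0] w by auto
      have e0: "wt G x + R x = N" using wf nz[OF x] by blast
      have T1: "card {w\<in>V p. ip x w = 1} = 1" using Tp[of x] x w True by auto
      have e: "wt G x + ((\<Sum>i\<in>{1..<p}. card {w\<in>V i. ip x w = 1}) + 1) = N"
        using e0 unfolding split T1 .
      have q2: "2 dvd (\<Sum>i\<in>{1..<p}. card {w\<in>V i. ip x w = 1})" using Qd[of x] True by simp
      have ew: "even (wt G x)" using so_even[OF so, of x x] unfolding both_self .
      have eN: "even N" using N8 by (rule dvd_trans[rotated]) simp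
      show False using e q2 ew eN by (rule ar1)
    next
      case False
      then have u2: "u p = 2" using up up1[OF p1] by simp
      then have "card (V p - {0}) \<ge> 2" using card_nz by simp
      then obtain w1 w2 where ww: "w1 \<in> V p - {0}" "w2 \<in> V p - {0}" "w1 \<noteq> w2"
        using two_elems[OF finite, of "V p - {0}"] by blast
      obtain x where x: "ip x w1 = 1" "ip x w2 = 0" using separate[of w1 w2] ww by auto
      obtain y where y: "ip y w2 = 1" "ip y w1 = 0" using separate[of w2 w1] ww by auto
      have xy: "ip (x + y) w1 = 1" using x y by (simp add: ip_add_left)
      have m4: "wt G z mod 4 = 2" if z: "ip z w = 1" "w \<in> V p" for z w
      proof -
        have e0: "wt G z + R z = N" using wf nz[OF z(1)] by blast
        have T2: "card {w\<in>V p. ip z w = 1} = 2" using Tp[of z] z u2 by auto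
        have e: "wt G z + ((\<Sum>i\<in>{1..<p}. card {w\<in>V i. ip z w = 1}) + 2) = N"
          using e0 unfolding split T2 .
        have q4: "4 dvd (\<Sum>i\<in>{1..<p}. card {w\<in>V i. ip z w = 1})" using Qd[of z] u2 by simp
        have n4: "4 dvd N" using N8 by (rule dvd_trans[rotated]) simp
        show ?thesis using e q4 n4 by (rule ar2)
      qed
      have "wt G x mod 4 = 2" using m4[of x w1] x ww by blast
      moreover have "wt G y mod 4 = 2" using m4[of y w2] y ww by blast
      moreover have "wt G (x + y) mod 4 = 2" using m4[of "x + y" w1] xy ww by blast
      moreover have "even (both G x y)" by (rule so_even[OF so])
      moreover have "wt G (x + y) + 2 * both G x y = wt G x + wt G y" by (rule wt_add)
      ultimately show False by (rule ar3)
    qed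
  qed
  show ?thesis using A B C by blast
qed


end
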